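(* Let $(Y_n)$ satisfy Condition 1 and let $X_n$ be the number of rounds of the associated leader election process. Then $\mathbb E X_n<\infty$ for every $n$, $\mathbb E X_{n+1}-\mathbb E X_n=O(1/n)$, and $d_W(X_n,X_m)=O\bigl(|n-m|/(n\wedge m)\bigr)$ uniformly in $n,m\ge1$.
   Context: Condition 1: $(Y_n)_{n\ge1}$ is a sequence of random variables with $1\le Y_n\le n$ for all $n$ and $\Pr(Y_n=n)<1$ for $n\ge2$ (so $Y_1=1$), such that: (i) $\Pr(Y_n\le k)\ge\Pr(Y_{n+1}\le k)$ for all $n,k\ge1$; (ii) there are constants $\alpha\in(0,1)$, $\varepsilon>0$ and a sequence $\delta_n=O((\log n)^{-1-\varepsilon})$ with $\mathbb E Y_{n+1}-\mathbb E Y_n=\alpha+O(\delta_n)$; (iii) for such $\varepsilon,\delta_n$, $\Pr(|Y_n-\alpha n|>\delta_n n)=O(n^{-2-\varepsilon})$. (Here $\log 1$ is interpreted as a fixed positive number.) Leader election process: $X_1=0$ and $X_n\overset{d}{=}X_{Y_n}+1$ for $n\ge2$, with $Y_n$ independent of $(X_i)_{i\le n}$; i.e. $X_n$ is the number of steps to absorption at $1$ of the Markov chain started at $n$ with transition probabilities $P(i,j)=\Pr(Y_i=j)$. $d_W$ denotes the Wasserstein distance $d_W(X,Y)=\inf\mathbb E|X'-Y'|$ over couplings of the laws of $X$ and $Y$. *)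

theory Defs
  imports "HOL-Probability.Probability" "HOL-Library.Landau_Symbols"
begin

definition couplings :: "nat pmf \<Rightarrow> nat pmf \<Rightarrow> (nat \<times> nat) pmf set" where
  "couplings p q = {c. map_pmf fst c = p \<and> map_pmf snd c = q}"

definition dW :: "nat pmf \<Rightarrow> nat pmf \<Rightarrow> ennreal" where
  "dW p q = (INF c \<in> couplings p q.
      \<integral>\<^sup>+ x. ennreal \<bar>real (fst x) - real (snd x)\<bar> \<partial>(measure_pmf c))"

definition condition1 :: "(nat \<Rightarrow> nat pmf) \<Rightarrow> bool" where
  "condition1 Y \<longleftrightarrow>
     (\<forall>n\<ge>1. set_pmf (Y n) \<subseteq> {1..n}) \<and>
     (\<forall>n\<ge>2. pmf (Y n) n < 1) \<and>
     (\<forall>n\<ge>1. \<forall>k\<ge>1. measure_pmf.prob (Y n) {..k} \<ge> measure_pmf.prob (Y (n+1)) {..k}) \<and>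
     (\<exists>(\<alpha>::real) (\<epsilon>::real) (\<delta>::nat \<Rightarrow> real).
        0 < \<alpha> \<and> \<alpha> < 1 \<and> 0 < \<epsilon> \<and>
        \<delta> \<in> O(\<lambda>n. (if n = 1 then 1 else ln (real n)) powr (-1 - \<epsilon>)) \<and>
        (\<lambda>n. measure_pmf.expectation (Y (n+1)) real
              - measure_pmf.expectation (Y n) real - \<alpha>) \<in> O(\<delta>) \<and>
        (\<lambda>n. measure_pmf.prob (Y n) {k. \<bar>real k - \<alpha> * real n\<bar> > \<delta> n * real n})
           \<in> O(\<lambda>n. real n powr (-2 - \<epsilon>)))"

definition leader_election :: "(nat \<Rightarrow> nat pmf) \<Rightarrow> (nat \<Rightarrow> nat pmf) \<Rightarrow> bool" where
  "leader_election Y X \<longleftrightarrow>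
     X 1 = return_pmf 0 \<and>
     (\<forall>n\<ge>2. X n = bind_pmf (Y n) (\<lambda>k. map_pmf Suc (X k)))"

end

theory Submission imports Defs begin

lemma tangent_powr:
  fixes L c \<epsilon> :: real
  assumes e: "0 < \<epsilon>" and c: "0 < c" and Lc: "1 \<le> L - c"
  shows "L powr (-\<epsilon>) + \<epsilon> * c * L powr (-1-\<epsilon>) \<le> (L - c) powr (-\<epsilon>)"
proof -
  have L: "L > 0" using c Lc by linarith
  define u where "u = c / L"
  have u: "0 < u" "u < 1" using c L Lc unfolding u_def by (auto simp: field_simps)
  have Lu: "L - c = L * (1 - u)" unfolding u_def using L by (simp add: field_simps)
  have l: "ln (1 - u) \<le> (1 - u) - 1" using u by (intro ln_le_minus_one) simp
  have "\<epsilon> * u \<le> - \<epsilon> * ln (1 - u)" using mult_left_mono[OF l, of \<epsilon>] e by simp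
  then have "1 + \<epsilon> * u \<le> exp (- \<epsilon> * ln (1 - u))"
    using exp_ge_add_one_self[of "- \<epsilon> * ln (1 - u)"] by linarith
  also have "exp (- \<epsilon> * ln (1 - u)) = (1 - u) powr (-\<epsilon>)"
    using u by (simp add: powr_def)
  finally have 1: "1 + \<epsilon> * u \<le> (1 - u) powr (-\<epsilon>)" .
  have "(L - c) powr (-\<epsilon>) = L powr (-\<epsilon>) * (1 - u) powr (-\<epsilon>)"
    unfolding Lu using L u by (simp add: powr_mult)
  also have "\<dots> \<ge> L powr (-\<epsilon>) * (1 + \<epsilon> * u)"
    using 1 by (intro mult_left_mono) auto
  finally have 2: "L powr (-\<epsilon>) * (1 + \<epsilon> * u) \<le> (L - c) powr (-\<epsilon>)" .
  have "L powr (-1-\<epsilon>) = L powr (-\<epsilon>) / L"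
  proof -
    have "L powr (-1-\<epsilon>) = L powr (-1 + -\<epsilon>)" by simp
    also have "\<dots> = L powr (-1) * L powr (-\<epsilon>)" by (rule powr_add)
    also have "L powr (-1) = 1 / L" using L by (simp add: powr_neg_one)
    finally show ?thesis by simp
  qed
  then have "L powr (-\<epsilon>) * (1 + \<epsilon> * u) = L powr (-\<epsilon>) + \<epsilon> * c * L powr (-1-\<epsilon>)"
    unfolding u_def using L by (simp add: field_simps)
  then show ?thesis using 2 by simp
qed

lemma npow_le_ln:
  fixes x \<epsilon> :: real
  assumes e: "0 < \<epsilon>" and x: "1 < x"
  shows "x powr (-\<epsilon>) \<le> (\<epsilon> / (1 + \<epsilon>)) powr (-1-\<epsilon>) * ln x powr (-1-\<epsilon>)"
proof -
  define \<beta> where "\<beta> = \<epsilon> / (1 + \<epsilon>)"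
  have b: "0 < \<beta>" unfolding \<beta>_def using e by simp
  have lx: "0 < ln x" using x by simp
  have "ln x \<le> x powr \<beta> / \<beta>" using x b by (intro ln_powr_bound) auto
  then have "ln x powr (1 + \<epsilon>) \<le> (x powr \<beta> / \<beta>) powr (1 + \<epsilon>)"
    using lx e by (intro powr_mono2) auto
  also have "\<dots> = x powr (\<beta> * (1 + \<epsilon>)) / \<beta> powr (1 + \<epsilon>)"
    using x b by (simp add: powr_divide powr_powr)
  also have "\<beta> * (1 + \<epsilon>) = \<epsilon>" unfolding \<beta>_def using e by (simp add: field_simps)
  finally have A: "ln x powr (1 + \<epsilon>) * \<beta> powr (1 + \<epsilon>) \<le> x powr \<epsilon>"
    using b by (simp add: field_simps)
  have pos1: "0 < ln x powr (1 + \<epsilon>) * \<beta> powr (1 + \<epsilon>)" using lx b by simp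
  have "x powr (-\<epsilon>) = 1 / x powr \<epsilon>" by (simp add: powr_minus_divide)
  also have "\<dots> \<le> 1 / (ln x powr (1 + \<epsilon>) * \<beta> powr (1 + \<epsilon>))"
    using A pos1 x by (intro divide_left_mono) (auto intro!: mult_pos_pos)
  also have "\<dots> = \<beta> powr (-1-\<epsilon>) * ln x powr (-1-\<epsilon>)"
  proof -
    have "\<beta> powr (-1-\<epsilon>) = 1 / \<beta> powr (1+\<epsilon>)" "ln x powr (-1-\<epsilon>) = 1 / ln x powr (1+\<epsilon>)"
      using powr_minus_divide[of \<beta> "1+\<epsilon>"] powr_minus_divide[of "ln x" "1+\<epsilon>"] by (simp_all add: algebra_simps)
    then show ?thesis by simp
  qed
  finally show ?thesis unfolding \<beta>_def .
qed

lemma t_small: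
  fixes \<epsilon> \<eta> :: real
  assumes e: "0 < \<epsilon>" and h: "0 < \<eta>"
  shows "\<exists>N::nat. \<forall>n\<ge>N. ln (real n) powr (-1-\<epsilon>) \<le> \<eta>"
proof -
  define \<Lambda> where "\<Lambda> = \<eta> powr (-1/(1+\<epsilon>))"
  have L: "0 < \<Lambda>" unfolding \<Lambda>_def using h by simp
  have m1: "-1/(1+\<epsilon>) * (-1-\<epsilon>) = 1" using e by (simp add: field_simps)
  have "\<Lambda> powr (-1-\<epsilon>) = \<eta>"
    unfolding \<Lambda>_def using h e by (simp only: powr_powr m1) simp
  moreover have "ln (real n) powr (-1-\<epsilon>) \<le> \<Lambda> powr (-1-\<epsilon>)" if "n \<ge> nat \<lceil>exp \<Lambda>\<rceil>" for n
  proof -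
    have "exp \<Lambda> \<le> real n" using that by linarith
    moreover have "0 < real n" using \<open>exp \<Lambda> \<le> real n\<close> exp_gt_zero[of \<Lambda>] by linarith
    ultimately have "ln (exp \<Lambda>) \<le> ln (real n)" by (subst ln_le_cancel_iff) auto
    then have "\<Lambda> \<le> ln (real n)" by simp
    then show ?thesis using L e by (intro powr_mono2') auto
  qed
  ultimately show ?thesis by blast
qed

lemma poly_ineq:
  fixes \<alpha> c1 e c4 K t :: real
  assumes a: "0 < \<alpha>" and c: "0 \<le> c1" "0 \<le> e" "0 \<le> c4" and K: "\<alpha> * K = c1 + e + c4 * \<alpha> + 1"
    and t: "0 < t" "c1 * t \<le> \<alpha> / 2" "c4 * t \<le> 1/2" "(c4 * \<alpha> * K + c1 * K) * t \<le> 1"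
  shows "(\<alpha> + e * t) / ((\<alpha> - c1 * t) * (1 + K * t)) + c4 * t \<le> 1"
proof -
  have "0 < \<alpha> * K" using K c a by (simp add: add_nonneg_pos)
  then have K0: "0 \<le> K" using a by (simp add: zero_less_mult_iff)
  define u where "u = \<alpha> - c1 * t"
  define v where "v = 1 + K * t"
  have u: "0 < u" unfolding u_def using t a by linarith
  have v: "0 < v" unfolding v_def using K0 t(1) by (simp add: add_pos_nonneg)
  have uv0: "u * v = \<alpha> + (\<alpha> * K) * t - c1 * t - c1 * K * t^2"
    unfolding u_def v_def by (simp add: algebra_simps power2_eq_square)
  have uv: "u * v = \<alpha> + (e + c4 * \<alpha> + 1) * t - c1 * K * t^2"
    unfolding uv0 K by (simp add: algebra_simps)
  have uvle: "u * v \<le> \<alpha> + (\<alpha> * K - c1) * t"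
  proof -
    have "0 \<le> c1 * K * t^2" using c K0 by simp
    then show ?thesis using uv K by (simp add: algebra_simps)
  qed
  have "c4 * t * (u * v) \<le> c4 * t * (\<alpha> + (\<alpha> * K - c1) * t)"
    using uvle c t by (intro mult_left_mono) auto
  also have "\<dots> \<le> c4 * \<alpha> * t + c4 * \<alpha> * K * t * t"
    using c t by (simp add: algebra_simps)
  finally have A: "c4 * t * (u * v) \<le> c4 * \<alpha> * t + c4 * \<alpha> * K * t * t" .
  have "(c4 * \<alpha> * K + c1 * K) * t * t \<le> 1 * t" using t(4) t(1) by (intro mult_right_mono) auto
  then have B: "(c4 * \<alpha> * K + c1 * K) * t * t \<le> t" by simp
  have B': "c4 * \<alpha> * K * (t * t) + c1 * K * (t * t) \<le> t" using B by (simp add: algebra_simps)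
  have A': "c4 * t * (u * v) \<le> c4 * \<alpha> * t + c4 * \<alpha> * K * (t * t)" using A by (simp add: algebra_simps)
  have uv': "u * v = \<alpha> + e * t + c4 * \<alpha> * t + t - c1 * K * (t * t)"
    using uv by (simp add: algebra_simps power2_eq_square)
  have ex: "(1 - c4 * t) * (u * v) = u * v - c4 * t * (u * v)" by (simp add: algebra_simps)
  have main: "\<alpha> + e * t \<le> (1 - c4 * t) * (u * v)"
    unfolding ex using A' B' uv' by linarith
  have "(\<alpha> + e * t) / (u * v) \<le> 1 - c4 * t"
    using main u v by (simp add: divide_le_eq mult.commute)
  then show ?thesis unfolding u_def v_def by simp
qed

lemma exp_neg_le: "0 \<le> (y::real) \<Longrightarrow> exp (- y) \<le> 1 / (1 + y)"
  using exp_ge_add_one_self[of y] by (simp add: exp_minus field_simps)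


definition ovl :: "real \<Rightarrow> real \<Rightarrow> real \<Rightarrow> real \<Rightarrow> real" where
  "ovl a b x y = max 0 (min b y - max a x)"

lemma ovl_sym: "ovl a b x y = ovl x y a b"
  unfolding ovl_def by (simp add: min.commute max.commute)

lemma ovl_phi: "a \<le> b \<Longrightarrow> x \<le> y \<Longrightarrow>
  ovl a b x y = max a (min b y) - max a (min b x)"
  unfolding ovl_def by (auto simp: max_def min_def)

lemma ovl_sums:
  fixes A :: "nat \<Rightarrow> real"
  assumes mono: "\<And>j. A j \<le> A (Suc j)" and A0: "A 0 = 0" and lim: "A \<longlonglongrightarrow> 1"
    and ab: "0 \<le> a" "a \<le> b" "b \<le> 1"
  shows "(\<lambda>j. ovl a b (A j) (A (Suc j))) sums (b - a)"
proof -
  define \<phi> where "\<phi> x = max a (min b x)" for x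
  have eq: "ovl a b (A j) (A (Suc j)) = \<phi> (A (Suc j)) - \<phi> (A j)" for j
    using ovl_phi[OF ab(2) mono[of j]] by (simp add: \<phi>_def)
  have ps: "(\<Sum>j<J. ovl a b (A j) (A (Suc j))) = \<phi> (A J) - \<phi> (A 0)" for J
    unfolding eq by (rule sum_lessThan_telescope)
  have "(\<lambda>J. \<phi> (A J) - \<phi> (A 0)) \<longlonglongrightarrow> \<phi> 1 - \<phi> (A 0)"
    unfolding \<phi>_def by (intro tendsto_intros lim)
  moreover have "\<phi> 1 - \<phi> (A 0) = b - a" using ab A0 by (simp add: \<phi>_def)
  ultimately show ?thesis unfolding sums_def ps by simp
qed

lemma lim_measure_lessThan:
  fixes p :: "nat pmf"
  shows "(\<lambda>J. measure p {..<J}) \<longlonglongrightarrow> 1"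
proof -
  have "(\<lambda>J. measure p {..<J}) \<longlonglongrightarrow> measure p (\<Union>J. {..<J})"
    by (rule measure_pmf.finite_Lim_measure_incseq) (auto simp: incseq_def)
  moreover have "(\<Union>J. {..<J::nat}) = UNIV" by auto
  ultimately show ?thesis by simp
qed

lemma pmf_as_diff:
  fixes p :: "nat pmf"
  shows "pmf p i = measure p {..i} - measure p {..<i}"
proof -
  have "{..i} = insert i {..<i}" by auto
  hence "measure p {..i} = measure p {i} + measure p {..<i}"
    by (simp add: measure_pmf.finite_measure_Union[symmetric] del: insert_is_Un)
  then show ?thesis by (simp add: measure_pmf_single)
qed

lemma stoch_coupling:
  fixes p q :: "nat pmf"
  assumes dom: "\<And>k. measure q {..k} \<le> measure p {..k}"
  shows "\<exists>c. map_pmf fst c = p \<and> map_pmf snd c = q \<and> (\<forall>z\<in>set_pmf c. fst z \<le> snd z)"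
proof -
  define Fm where "Fm i = measure p {..<i}" for i
  define Gm where "Gm j = measure q {..<j}" for j
  have FS: "Fm (Suc i) = measure p {..i}" for i unfolding Fm_def lessThan_Suc_atMost ..
  have GS: "Gm (Suc i) = measure q {..i}" for i unfolding Gm_def lessThan_Suc_atMost ..
  define c where "c i j = ovl (Fm i) (Fm (Suc i)) (Gm j) (Gm (Suc j))" for i j
  have c_nn: "c i j \<ge> 0" for i j unfolding c_def ovl_def by simp
  have Fmono: "Fm i \<le> Fm (Suc i)" for i unfolding Fm_def
    by (intro measure_pmf.finite_measure_mono) auto
  have Gmono: "Gm i \<le> Gm (Suc i)" for i unfolding Gm_def
    by (intro measure_pmf.finite_measure_mono) auto
  have Fb: "0 \<le> Fm i" "Fm i \<le> 1" for i unfolding Fm_def by auto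
  have Gb: "0 \<le> Gm i" "Gm i \<le> 1" for i unfolding Gm_def by auto
  have pF: "pmf p i = Fm (Suc i) - Fm i" for i using pmf_as_diff[of p i] FS Fm_def by simp
  have qG: "pmf q j = Gm (Suc j) - Gm j" for j using pmf_as_diff[of q j] GS Gm_def by simp
  have row: "(\<lambda>j. c i j) sums pmf p i" for i
    unfolding c_def pF
    by (rule ovl_sums[where A=Gm, OF Gmono]) (use Gb Fb Fmono lim_measure_lessThan[of q] in \<open>auto simp: Gm_def[abs_def]\<close>)
  have col: "(\<lambda>i. c i j) sums pmf q j" for j
    unfolding c_def qG ovl_sym[of "Fm _"]
    by (rule ovl_sums[where A=Fm, OF Fmono]) (use Gb Fb Gmono lim_measure_lessThan[of p] in \<open>auto simp: Fm_def[abs_def]\<close>)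
  have c0: "c i j = 0" if "pmf p i = 0" for i j
    using that unfolding c_def pF ovl_def by (auto simp: max_def min_def)
  have cpos: "i \<le> j" if "c i j \<noteq> 0" for i j
  proof (rule ccontr)
    assume "\<not> i \<le> j"
    hence "j < i" by simp
    have "Gm (Suc j) \<le> Fm (Suc j)" unfolding GS FS by (rule dom)
    also have "Fm (Suc j) \<le> Fm i" unfolding Fm_def using \<open>j < i\<close>
      by (intro measure_pmf.finite_measure_mono) auto
    finally have "c i j = 0" unfolding c_def ovl_def by (auto simp: max_def min_def)
    with that show False by simp
  qed
  define K where "K i = (if pmf p i = 0 then return_pmf i else embed_pmf (\<lambda>j. c i j / pmf p i))" for i
  have pK: "pmf (K i) j = c i j / pmf p i" if "pmf p i \<noteq> 0" for i j
  proof -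
    have pos: "pmf p i > 0" using that pmf_nonneg[of p i] by linarith
    have "(\<lambda>j. c i j / pmf p i) sums (pmf p i / pmf p i)" by (intro sums_divide row)
    hence s: "(\<lambda>j. c i j / pmf p i) sums 1" using pos by simp
    have "(\<integral>\<^sup>+j. ennreal (c i j / pmf p i) \<partial>count_space UNIV) = 1"
    proof -
      have s2: "(\<lambda>j. ennreal (c i j / pmf p i)) sums ennreal 1" using s pos c_nn by (subst sums_ennreal) auto
      show ?thesis unfolding nn_integral_count_space_nat using sums_unique[OF s2] by simp
    qed
    then have "pmf (embed_pmf (\<lambda>j. c i j / pmf p i)) j = c i j / pmf p i"
      using pos c_nn by (intro pmf_embed_pmf) auto
    then show ?thesis unfolding K_def using that by simp
  qed
  define C where "C = bind_pmf p (\<lambda>i. map_pmf (Pair i) (K i))"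
  have m1: "map_pmf fst C = p"
    unfolding C_def map_bind_pmf by (simp add: pmf.map_comp o_def map_pmf_const bind_return_pmf')
  have m2: "map_pmf snd C = q"
  proof (rule pmf_eqI)
    fix j
    have "map_pmf snd C = bind_pmf p K"
      unfolding C_def map_bind_pmf by (simp add: pmf.map_comp o_def)
    hence "ennreal (pmf (map_pmf snd C) j) = (\<integral>\<^sup>+i. pmf (K i) j \<partial>measure_pmf p)"
      by (simp add: ennreal_pmf_bind)
    also have "\<dots> = (\<integral>\<^sup>+i. ennreal (c i j) \<partial>count_space UNIV)"
      unfolding nn_integral_measure_pmf
    proof (intro nn_integral_cong)
      fix i
      have "pmf p i * pmf (K i) j = c i j"
        by (cases "pmf p i = 0") (auto simp: pK c0)
      then show "ennreal (pmf p i) * ennreal (pmf (K i) j) = ennreal (c i j)"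
        by (simp add: ennreal_mult[symmetric])
    qed
    also have "\<dots> = ennreal (pmf q j)"
      unfolding nn_integral_count_space_nat
      using col c_nn by (subst sums_unique[symmetric]) (auto simp: sums_ennreal)
    finally show "pmf (map_pmf snd C) j = pmf q j" by simp
  qed
  have sup: "\<forall>z\<in>set_pmf C. fst z \<le> snd z"
  proof
    fix z assume "z \<in> set_pmf C"
    then obtain i j where z: "z = (i, j)" "i \<in> set_pmf p" "j \<in> set_pmf (K i)"
      unfolding C_def by auto
    hence "pmf p i \<noteq> 0" by (simp add: set_pmf_eq)
    moreover have "pmf (K i) j \<noteq> 0" using z by (simp add: set_pmf_eq)
    ultimately have "c i j \<noteq> 0" using pK by force
    thus "fst z \<le> snd z" using z cpos by simp
  qed
  show ?thesis using m1 m2 sup by blast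
qed


lemma nn_to_real:
  fixes f :: "'a \<Rightarrow> real"
  assumes "integrable (measure_pmf M) f" "\<And>x. 0 \<le> f x"
  shows "(\<integral>\<^sup>+x. ennreal (f x) \<partial>measure_pmf M) = ennreal (measure_pmf.expectation M f)"
  using assms by (intro nn_integral_eq_integral) auto

locale LE =
  fixes Y X :: "nat \<Rightarrow> nat pmf"
  assumes supp: "\<And>n. n \<ge> 1 \<Longrightarrow> set_pmf (Y n) \<subseteq> {1..n}"
  and self: "\<And>n. n \<ge> 2 \<Longrightarrow> pmf (Y n) n < 1"
  and dom: "\<And>n k. n \<ge> 1 \<Longrightarrow> k \<ge> 1 \<Longrightarrow> measure (Y (n+1)) {..k} \<le> measure (Y n) {..k}"
  and X1: "X 1 = return_pmf 0"
  and Xrec: "\<And>n. n \<ge> 2 \<Longrightarrow> X n = bind_pmf (Y n) (\<lambda>k. map_pmf Suc (X k))"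
begin

lemma finY: "n \<ge> 1 \<Longrightarrow> finite (set_pmf (Y n))"
  using supp by (meson finite_atLeastAtMost finite_subset)

lemma sumY: "n \<ge> 1 \<Longrightarrow> (\<Sum>k\<in>{1..n}. pmf (Y n) k) = 1"
  using supp by (intro sum_pmf_eq_1) auto

lemma nn_rec:
  fixes f :: "nat \<Rightarrow> ennreal"
  assumes "n \<ge> 2"
  shows "(\<integral>\<^sup>+t. f t \<partial>X n) = (\<Sum>k\<in>{1..n}. (\<integral>\<^sup>+i. f (Suc i) \<partial>X k) * pmf (Y n) k)"
proof -
  have "(\<integral>\<^sup>+t. f t \<partial>X n) = (\<integral>\<^sup>+k. (\<integral>\<^sup>+i. f (Suc i) \<partial>X k) \<partial>Y n)"
    using assms by (simp add: Xrec)
  also have "\<dots> = (\<Sum>k\<in>{1..n}. (\<integral>\<^sup>+i. f (Suc i) \<partial>X k) * pmf (Y n) k)"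
    using supp[of n] assms by (intro nn_integral_measure_pmf_support) auto
  finally show ?thesis .
qed

lemma real_rec:
  fixes f :: "nat \<Rightarrow> real"
  assumes n: "n \<ge> 2" and intk: "\<And>k. k \<in> {1..n} \<Longrightarrow> integrable (X k) (\<lambda>i. f (Suc i))"
    and intn: "integrable (X n) f" and nn: "\<And>x. 0 \<le> f x"
  shows "measure_pmf.expectation (X n) f =
     (\<Sum>k\<in>{1..n}. pmf (Y n) k * measure_pmf.expectation (X k) (\<lambda>i. f (Suc i)))"
proof -
  have "ennreal (measure_pmf.expectation (X n) f) = (\<integral>\<^sup>+t. ennreal (f t) \<partial>X n)"
    using nn_to_real[OF intn] nn by simp
  also have "\<dots> = (\<Sum>k\<in>{1..n}. (\<integral>\<^sup>+i. ennreal (f (Suc i)) \<partial>X k) * pmf (Y n) k)"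
    by (rule nn_rec[OF n])
  also have "\<dots> = (\<Sum>k\<in>{1..n}. ennreal (pmf (Y n) k * measure_pmf.expectation (X k) (\<lambda>i. f (Suc i))))"
  proof (intro sum.cong refl)
    fix k assume k: "k \<in> {1..n}"
    have "(\<integral>\<^sup>+i. ennreal (f (Suc i)) \<partial>X k) = ennreal (measure_pmf.expectation (X k) (\<lambda>i. f (Suc i)))"
      using nn_to_real[OF intk[OF k]] nn by simp
    then show "(\<integral>\<^sup>+i. ennreal (f (Suc i)) \<partial>X k) * pmf (Y n) k
        = ennreal (pmf (Y n) k * measure_pmf.expectation (X k) (\<lambda>i. f (Suc i)))"
      using ennreal_mult'[OF pmf_nonneg[of "Y n" k], of "measure_pmf.expectation (X k) (\<lambda>i. f (Suc i))"]
      by (simp add: mult.commute)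
  qed
  also have "\<dots> = ennreal (\<Sum>k\<in>{1..n}. pmf (Y n) k * measure_pmf.expectation (X k) (\<lambda>i. f (Suc i)))"
    using nn by (intro sum_ennreal) (auto intro!: mult_nonneg_nonneg integral_nonneg)
  finally show ?thesis using nn
    by (subst (asm) ennreal_inj) (auto intro!: sum_nonneg mult_nonneg_nonneg integral_nonneg)
qed

definition tr :: "nat \<Rightarrow> nat \<Rightarrow> real" where
  "tr J n = measure_pmf.expectation (X n) (\<lambda>t. real (min t J))"

lemma tr_int: "integrable (X n) (\<lambda>t. real (min t J))"
  by (rule measure_pmf.integrable_const_bound[where B="real J"]) auto

lemma tr_rec:
  assumes n: "n \<ge> 2"
  shows "tr (Suc J) n = (\<Sum>k\<in>{1..n}. pmf (Y n) k * (1 + tr J k))"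
proof -
  have "tr (Suc J) n = (\<Sum>k\<in>{1..n}. pmf (Y n) k *
      measure_pmf.expectation (X k) (\<lambda>i. real (min (Suc i) (Suc J))))"
    unfolding tr_def
    by (rule real_rec[OF n]) (auto intro: measure_pmf.integrable_const_bound[where B="real (Suc J)"] tr_int)
  also have "\<dots> = (\<Sum>k\<in>{1..n}. pmf (Y n) k * (1 + tr J k))"
  proof (intro sum.cong refl arg_cong2[where f="(*)"])
    fix k
    have "measure_pmf.expectation (X k) (\<lambda>i. real (min (Suc i) (Suc J)))
        = measure_pmf.expectation (X k) (\<lambda>i. 1 + real (min i J))"
      by (intro Bochner_Integration.integral_cong) auto
    also have "\<dots> = 1 + tr J k" unfolding tr_def
      by (subst Bochner_Integration.integral_add) (auto intro: tr_int)
    finally show "measure_pmf.expectation (X k) (\<lambda>i. real (min (Suc i) (Suc J))) = 1 + tr J k" .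
  qed
  finally show ?thesis .
qed

lemma tr_mono: "tr J n \<le> tr (Suc J) n"
  unfolding tr_def by (intro integral_mono tr_int) auto

lemma tr_nn: "0 \<le> tr J n"
  unfolding tr_def by (intro Bochner_Integration.integral_nonneg) auto

lemma tr_0: "tr 0 n = 0"
  unfolding tr_def by simp

lemma tr_1: "tr J 1 = 0"
proof -
  have "X (Suc 0) = return_pmf 0" using X1 by simp
  then show ?thesis unfolding tr_def by simp
qed

lemma tr_bounded: "n \<ge> 1 \<Longrightarrow> \<exists>B. \<forall>J. tr J n \<le> B"
proof (induction n rule: less_induct)
  case (less n)
  show ?case
  proof (cases "n = 1")
    case True then show ?thesis using tr_1 by (intro exI[of _ 0]) auto
  next
    case False
    with less.prems have n2: "n \<ge> 2" by simp
    have "\<forall>k\<in>{1..<n}. \<exists>B. \<forall>J. tr J k \<le> B" using less.IH by auto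
    then obtain Bf where Bf: "\<And>k J. k \<in> {1..<n} \<Longrightarrow> tr J k \<le> Bf k"
      by metis
    define p where "p = pmf (Y n) n"
    have p1: "p < 1" using self[OF n2] p_def by simp
    have p0: "0 \<le> p" unfolding p_def by simp
    define S where "S = (\<Sum>k\<in>{1..<n}. pmf (Y n) k * (1 + Bf k))"
    have step: "tr (Suc J) n \<le> (S + p) / (1 - p)" for J
    proof -
      have ins: "{1..n} = insert n {1..<n}" using n2 by auto
      have "tr (Suc J) n = (\<Sum>k\<in>{1..<n}. pmf (Y n) k * (1 + tr J k)) + p * (1 + tr J n)"
        unfolding tr_rec[OF n2] ins p_def by (simp add: add.commute)
      also have "\<dots> \<le> S + p * (1 + tr (Suc J) n)"
        unfolding S_def
        by (intro add_mono sum_mono mult_left_mono tr_mono p0) (auto intro: Bf)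
      finally have "tr (Suc J) n * (1 - p) \<le> S + p" by (simp add: algebra_simps)
      then show ?thesis using p1 by (simp add: field_simps)
    qed
    have "tr J n \<le> max 0 ((S + p) / (1 - p))" for J
      using step by (cases J) (auto simp: tr_0 intro: max.coboundedI2)
    then show ?thesis by blast
  qed
qed

lemma E_fin: assumes "n \<ge> 1" shows "(\<integral>\<^sup>+t. ennreal (real t) \<partial>X n) < \<infinity>"
proof -
  obtain B where B: "\<And>J. tr J n \<le> B" using tr_bounded[OF assms] by blast
  have "(\<integral>\<^sup>+t. ennreal (real t) \<partial>X n) = (\<integral>\<^sup>+t. (SUP J. ennreal (real (min t J))) \<partial>X n)"
  proof (intro nn_integral_cong)
    fix t :: nat
    show "ennreal (real t) = (SUP J. ennreal (real (min t J)))"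
      by (intro antisym SUP_upper2[where i=t]) (auto intro!: SUP_least)
  qed
  also have "\<dots> = (SUP J. (\<integral>\<^sup>+t. ennreal (real (min t J)) \<partial>X n))"
    by (intro nn_integral_monotone_convergence_SUP) (auto simp: incseq_def le_fun_def)
  also have "\<dots> = (SUP J. ennreal (tr J n))"
    unfolding tr_def by (subst nn_to_real) (auto intro: tr_int)
  also have "\<dots> \<le> ennreal B" using B by (intro SUP_least ennreal_leI) auto
  also have "\<dots> < \<infinity>" by simp
  finally show ?thesis .
qed

definition mu :: "nat \<Rightarrow> real" where
  "mu n = measure_pmf.expectation (X n) real"

lemma intX: "n \<ge> 1 \<Longrightarrow> integrable (X n) real"
  using E_fin by (intro integrableI_nonneg) auto

lemma E_eq: "n \<ge> 1 \<Longrightarrow> (\<integral>\<^sup>+t. ennreal (real t) \<partial>X n) = ennreal (mu n)"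
  unfolding mu_def by (intro nn_to_real intX) auto

lemma mu_nn: "0 \<le> mu n"
  unfolding mu_def by (intro Bochner_Integration.integral_nonneg) auto

lemma X1': "X (Suc 0) = return_pmf 0" using X1 by simp

lemma mu_1: "mu 1 = 0"
  unfolding mu_def by (simp add: X1')

lemma mu_rec:
  assumes n: "n \<ge> 2"
  shows "mu n = 1 + (\<Sum>k\<in>{1..n}. pmf (Y n) k * mu k)"
proof -
  have "mu n = (\<Sum>k\<in>{1..n}. pmf (Y n) k * measure_pmf.expectation (X k) (\<lambda>i. real (Suc i)))"
    unfolding mu_def using n
    by (intro real_rec) (auto intro!: Bochner_Integration.integrable_add intX)
  also have "\<dots> = (\<Sum>k\<in>{1..n}. pmf (Y n) k * (1 + mu k))"
  proof (intro sum.cong refl arg_cong2[where f="(*)"])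
    fix k assume "k \<in> {1..n}"
    then have "integrable (X k) real" by (intro intX) auto
    then show "measure_pmf.expectation (X k) (\<lambda>i. real (Suc i)) = 1 + mu k"
      unfolding mu_def by (simp add: Bochner_Integration.integral_add)
  qed
  also have "\<dots> = (\<Sum>k\<in>{1..n}. pmf (Y n) k) + (\<Sum>k\<in>{1..n}. pmf (Y n) k * mu k)"
    by (simp add: algebra_simps sum.distrib)
  also have "\<dots> = 1 + (\<Sum>k\<in>{1..n}. pmf (Y n) k * mu k)" using n sumY by simp
  finally show ?thesis .
qed

definition L :: "nat \<Rightarrow> nat \<Rightarrow> real" where
  "L j n = measure (X n) {..j}"

lemma L_rec:
  assumes n: "n \<ge> 2"
  shows "L (Suc j) n = (\<Sum>k\<in>{1..n}. pmf (Y n) k * L j k)"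
proof -
  have "L (Suc j) n = measure_pmf.expectation (X n) (indicator {..Suc j})"
    unfolding L_def by simp
  also have "\<dots> = (\<Sum>k\<in>{1..n}. pmf (Y n) k *
      measure_pmf.expectation (X k) (\<lambda>i. indicator {..Suc j} (Suc i) :: real))"
    using n by (intro real_rec) (auto intro: measure_pmf.integrable_const_bound[where B=1])
  also have "\<dots> = (\<Sum>k\<in>{1..n}. pmf (Y n) k * L j k)"
  proof (intro sum.cong refl arg_cong2[where f="(*)"])
    fix k
    have "(\<lambda>i. indicator {..Suc j} (Suc i) :: real) = indicator {..j}"
      by (auto simp: indicator_def fun_eq_iff)
    then show "measure_pmf.expectation (X k) (\<lambda>i. indicator {..Suc j} (Suc i) :: real) = L j k"
      unfolding L_def by simp
  qed
  finally show ?thesis .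
qed

lemma L_0:
  assumes n: "n \<ge> 2"
  shows "L 0 n = 0"
proof -
  have "L 0 n = measure_pmf.expectation (X n) (indicator {..0})"
    unfolding L_def by simp
  also have "\<dots> = (\<Sum>k\<in>{1..n}. pmf (Y n) k *
      measure_pmf.expectation (X k) (\<lambda>i. indicator {..0} (Suc i) :: real))"
    using n by (intro real_rec) (auto intro: measure_pmf.integrable_const_bound[where B=1])
  also have "\<dots> = 0" by (simp add: indicator_def)
  finally show ?thesis .
qed

lemma L_1: "L j 1 = 1"
  unfolding L_def by (simp add: X1')

lemma L_nn: "0 \<le> L j n" and L_le1: "L j n \<le> 1"
  unfolding L_def by auto

lemma EY: "n \<ge> 1 \<Longrightarrow> measure_pmf.expectation (Y n) f = (\<Sum>k\<in>{1..n}. pmf (Y n) k * f k)"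
  using supp[of n] by (subst integral_measure_pmf_real[where A="{1..n}"]) (auto simp: mult.commute)

lemma Ycoup: "n \<ge> 1 \<Longrightarrow> \<exists>c. map_pmf fst c = Y n \<and> map_pmf snd c = Y (n+1) \<and> (\<forall>z\<in>set_pmf c. fst z \<le> snd z)"
proof (rule stoch_coupling)
  fix k assume n: "n \<ge> 1"
  show "measure (Y (n+1)) {..k} \<le> measure (Y n) {..k}"
  proof (cases "k = 0")
    case True
    have "0 \<notin> set_pmf (Y (n+1))" using supp[of "n+1"] by auto
    then have "measure (Y (n+1)) {..k} = 0" using True by (simp add: measure_pmf_single set_pmf_eq)
    then show ?thesis by simp
  qed (use dom n in auto)
qed

lemma coup_fin:
  assumes "map_pmf fst c = Y n" "map_pmf snd c = Y (n+1)" "n \<ge> 1"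
  shows "finite (set_pmf c)"
proof -
  have "fst z \<in> set_pmf (Y n) \<and> snd z \<in> set_pmf (Y (n+1))" if "z \<in> set_pmf c" for z
    unfolding assms(1,2)[symmetric] set_map_pmf using that by blast
  then have "set_pmf c \<subseteq> set_pmf (Y n) \<times> set_pmf (Y (n+1))"
    by (auto simp: mem_Times_iff)
  moreover have "finite (set_pmf (Y n) \<times> set_pmf (Y (n+1)))" using finY assms(3) by auto
  ultimately show ?thesis by (rule finite_subset)
qed

lemma coup_exp:
  fixes f g :: "nat \<Rightarrow> real"
  assumes "map_pmf fst c = Y n" "map_pmf snd c = Y (n+1)" "n \<ge> 1"
  shows "measure_pmf.expectation c (\<lambda>z. g (snd z) - f (fst z)) =
    measure_pmf.expectation (Y (n+1)) g - measure_pmf.expectation (Y n) f"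
proof -
  have fin: "finite (set_pmf c)" by (rule coup_fin[OF assms])
  have "measure_pmf.expectation c (\<lambda>z. g (snd z) - f (fst z)) =
     measure_pmf.expectation c (\<lambda>z. g (snd z)) - measure_pmf.expectation c (\<lambda>z. f (fst z))"
    by (rule Bochner_Integration.integral_diff[OF integrable_measure_pmf_finite[OF fin] integrable_measure_pmf_finite[OF fin]])
  also have "\<dots> = measure_pmf.expectation (Y (n+1)) g - measure_pmf.expectation (Y n) f"
    unfolding assms(1,2)[symmetric] by simp
  finally show ?thesis .
qed

lemma Ymono_exp:
  assumes n: "n \<ge> 1" and f: "\<And>a b. 1 \<le> a \<Longrightarrow> a \<le> b \<Longrightarrow> f a \<le> (f b :: real)"
  shows "measure_pmf.expectation (Y n) f \<le> measure_pmf.expectation (Y (n+1)) f"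
proof -
  obtain c where c: "map_pmf fst c = Y n" "map_pmf snd c = Y (n+1)" "\<forall>z\<in>set_pmf c. fst z \<le> snd z"
    using Ycoup[OF n] by blast
  have "fst z \<ge> 1" if "z \<in> set_pmf c" for z
  proof -
    have "fst z \<in> set_pmf (Y n)" using that by (simp flip: c(1))
    then show ?thesis using supp[OF n] by auto
  qed
  then have "0 \<le> measure_pmf.expectation c (\<lambda>z. f (snd z) - f (fst z))"
    using c(3) f by (intro integral_nonneg_AE) (auto simp: AE_measure_pmf_iff)
  then show ?thesis using coup_exp[OF c(1,2) n, of f f] by simp
qed

lemma anti_lift:
  fixes g :: "nat \<Rightarrow> real"
  assumes "\<And>n. n \<ge> 1 \<Longrightarrow> g (Suc n) \<le> g n" "a \<le> b" "1 \<le> a"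
  shows "g b \<le> g a"
  using assms(2)
proof (induction b rule: dec_induct)
  case (step m)
  then show ?case using assms(1)[of m] assms(3) by simp
qed simp

lemma L_anti: "n \<ge> 1 \<Longrightarrow> L j (Suc n) \<le> L j n"
proof (induction j arbitrary: n)
  case 0
  then show ?case using L_0[of "Suc n"] L_nn by simp
next
  case (Suc j)
  show ?case
  proof (cases "n = 1")
    case True
    then show ?thesis using L_1 L_le1 by simp
  next
    case False
    with Suc.prems have n2: "n \<ge> 2" by simp
    have anti: "L j b \<le> L j a" if "1 \<le> a" "a \<le> b" for a b
      using anti_lift[of "L j"] Suc.IH that by blast
    have "L (Suc j) (Suc n) = measure_pmf.expectation (Y (n+1)) (L j)"
      using n2 by (simp add: L_rec EY)
    also have "\<dots> = - measure_pmf.expectation (Y (n+1)) (\<lambda>k. - L j k)" by simp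
    also have "\<dots> \<le> - measure_pmf.expectation (Y n) (\<lambda>k. - L j k)"
      using Ymono_exp[of n "\<lambda>k. - L j k"] anti n2 by force
    also have "\<dots> = L (Suc j) n" using n2 by (simp add: L_rec EY)
    finally show ?thesis .
  qed
qed

lemma Xcoup:
  assumes "1 \<le> n" "n \<le> m"
  shows "\<exists>c. map_pmf fst c = X n \<and> map_pmf snd c = X m \<and> (\<forall>z\<in>set_pmf c. fst z \<le> snd z)"
proof (rule stoch_coupling)
  fix k
  show "measure (X m) {..k} \<le> measure (X n) {..k}"
    using anti_lift[of "L k", OF L_anti assms(2,1)] unfolding L_def by simp
qed

lemma Xcoup_int:
  assumes "1 \<le> n" "n \<le> m" and c: "map_pmf fst c = X n" "map_pmf snd c = X m"
    "\<forall>z\<in>set_pmf c. fst z \<le> snd z"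
  shows "(\<integral>\<^sup>+x. ennreal \<bar>real (fst x) - real (snd x)\<bar> \<partial>c) = ennreal (mu m - mu n)"
    and "mu n \<le> mu m"
proof -
  have i1: "integrable c (\<lambda>x. real (fst x))"
    using intX[of n] assms(1) unfolding c(1)[symmetric] by simp
  have i2: "integrable c (\<lambda>x. real (snd x))"
    using intX[of m] assms(1,2) unfolding c(2)[symmetric] by simp
  have e: "measure_pmf.expectation c (\<lambda>x. real (snd x) - real (fst x)) = mu m - mu n"
    unfolding mu_def c(1,2)[symmetric] using i1 i2 by simp
  have "(\<integral>\<^sup>+x. ennreal \<bar>real (fst x) - real (snd x)\<bar> \<partial>c) =
      (\<integral>\<^sup>+x. ennreal (real (snd x) - real (fst x)) \<partial>c)"
    using c(3) by (intro nn_integral_cong_AE) (auto simp: AE_measure_pmf_iff)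
  also have "\<dots> = ennreal (measure_pmf.expectation c (\<lambda>x. real (snd x) - real (fst x)))"
    using c(3) i1 i2 by (intro nn_integral_eq_integral) (auto simp: AE_measure_pmf_iff)
  finally show "(\<integral>\<^sup>+x. ennreal \<bar>real (fst x) - real (snd x)\<bar> \<partial>c) = ennreal (mu m - mu n)"
    using e by simp
  have "0 \<le> measure_pmf.expectation c (\<lambda>x. real (snd x) - real (fst x))"
    using c(3) by (intro integral_nonneg_AE) (auto simp: AE_measure_pmf_iff)
  then show "mu n \<le> mu m" using e by simp
qed

lemma mu_mono: "1 \<le> n \<Longrightarrow> n \<le> m \<Longrightarrow> mu n \<le> mu m"
  using Xcoup Xcoup_int(2) by blast

lemma dW_le:
  assumes "1 \<le> n" "n \<le> m"
  shows "dW (X n) (X m) \<le> ennreal (mu m - mu n)" and "dW (X m) (X n) \<le> ennreal (mu m - mu n)"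
proof -
  obtain c where c: "map_pmf fst c = X n" "map_pmf snd c = X m" "\<forall>z\<in>set_pmf c. fst z \<le> snd z"
    using Xcoup[OF assms] by blast
  have "c \<in> couplings (X n) (X m)" using c unfolding couplings_def by simp
  then show "dW (X n) (X m) \<le> ennreal (mu m - mu n)"
    unfolding dW_def Xcoup_int(1)[OF assms c, symmetric] by (rule INF_lower)
  have "map_pmf prod.swap c \<in> couplings (X m) (X n)"
    using c unfolding couplings_def by (simp add: pmf.map_comp o_def)
  then have "dW (X m) (X n) \<le> (\<integral>\<^sup>+x. ennreal \<bar>real (fst x) - real (snd x)\<bar> \<partial>map_pmf prod.swap c)"
    unfolding dW_def by (rule INF_lower)
  also have "\<dots> = (\<integral>\<^sup>+x. ennreal \<bar>real (fst x) - real (snd x)\<bar> \<partial>c)"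
    by (simp add: abs_minus_commute)
  finally show "dW (X m) (X n) \<le> ennreal (mu m - mu n)"
    unfolding Xcoup_int(1)[OF assms c] .
qed

lemma telescope_bound:
  fixes H :: real
  assumes "y \<le> y'" "\<And>k. y \<le> k \<Longrightarrow> k < y' \<Longrightarrow> mu (Suc k) - mu k \<le> H"
  shows "mu y' - mu y \<le> H * (real y' - real y)"
  using assms
proof (induction y' rule: dec_induct)
  case base then show ?case by simp
next
  case (step m)
  have "mu m - mu y \<le> H * (real m - real y)" using step by auto
  moreover have "mu (Suc m) - mu m \<le> H" using step by auto
  ultimately show ?case by (simp add: algebra_simps)
qed

lemma expY_lin:
  assumes "n \<ge> 1"
  shows "measure_pmf.expectation (Y n) (\<lambda>k. H * real k + M * indicator B k) =
    H * measure_pmf.expectation (Y n) real + M * measure (Y n) B"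
proof -
  have fin: "finite (set_pmf (Y n))" using finY assms by simp
  have "measure_pmf.expectation (Y n) (\<lambda>k. H * real k + M * indicator B k) =
     measure_pmf.expectation (Y n) (\<lambda>k. H * real k) + measure_pmf.expectation (Y n) (\<lambda>k. M * indicator B k)"
    by (rule Bochner_Integration.integral_add[OF integrable_measure_pmf_finite[OF fin] integrable_measure_pmf_finite[OF fin]])
  then show ?thesis by simp
qed

lemma key_step:
  fixes a b H :: real
  assumes n: "n \<ge> 2" and H: "H \<ge> 0"
    and win: "\<And>k. 1 \<le> k \<Longrightarrow> a \<le> real k \<Longrightarrow> real k < b \<Longrightarrow> mu (Suc k) - mu k \<le> H"
  shows "mu (Suc n) - mu n \<le> H * (measure_pmf.expectation (Y (n+1)) real - measure_pmf.expectation (Y n) real)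
      + (measure (Y n) {k. real k < a} + measure (Y (n+1)) {k. real k > b}) * mu (Suc n)"
proof -
  obtain c where c: "map_pmf fst c = Y n" "map_pmf snd c = Y (n+1)" "\<forall>z\<in>set_pmf c. fst z \<le> snd z"
    using Ycoup[of n] n by auto
  have n1: "n \<ge> 1" using n by simp
  define A where "A = {k. real k < a}"
  define B where "B = {k. real k > b}"
  define M where "M = mu (Suc n)"
  have "mu (Suc n) - mu n = measure_pmf.expectation (Y (n+1)) mu - measure_pmf.expectation (Y n) mu"
    using n mu_rec[of n] mu_rec[of "Suc n"] EY[of n] EY[of "Suc n"] by simp
  also have "\<dots> = measure_pmf.expectation c (\<lambda>z. mu (snd z) - mu (fst z))"
    using coup_exp[OF c(1,2) n1] by simp
  also have "\<dots> \<le> measure_pmf.expectation c (\<lambda>z. (H * real (snd z) + M * indicator B (snd z))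
       - (H * real (fst z) - M * indicator A (fst z)))"
  proof (intro integral_mono_AE)
    show "integrable c (\<lambda>z. mu (snd z) - mu (fst z))"
      by (rule integrable_measure_pmf_finite[OF coup_fin[OF c(1,2) n1]])
    show "integrable c (\<lambda>z. (H * real (snd z) + M * indicator B (snd z))
       - (H * real (fst z) - M * indicator A (fst z)))"
      by (rule integrable_measure_pmf_finite[OF coup_fin[OF c(1,2) n1]])
    show "AE z in c. mu (snd z) - mu (fst z) \<le> (H * real (snd z) + M * indicator B (snd z))
       - (H * real (fst z) - M * indicator A (fst z))"
    proof (unfold AE_measure_pmf_iff, intro ballI)
      fix z assume z: "z \<in> set_pmf c"
      obtain y y' where yy: "z = (y, y')" by (cases z)
      have yY: "y \<in> set_pmf (Y n)" using z yy unfolding c(1)[symmetric] set_map_pmf by force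
      have yY': "y' \<in> set_pmf (Y (n+1))" using z yy unfolding c(2)[symmetric] set_map_pmf by force
      have y1: "1 \<le> y" and y'n: "y' \<le> Suc n" using yY yY' supp[of n] supp[of "n+1"] n by auto
      have yy': "y \<le> y'" using c(3) z yy by auto
      have M0: "0 \<le> M" unfolding M_def by (rule mu_nn)
      show "mu (snd z) - mu (fst z) \<le> (H * real (snd z) + M * indicator B (snd z))
         - (H * real (fst z) - M * indicator A (fst z))"
      proof (cases "y \<in> A \<or> y' \<in> B")
        case True
        have "mu y' \<le> M" unfolding M_def using mu_mono y'n yy' y1 by simp
        moreover have "0 \<le> mu y" by (rule mu_nn)
        moreover have "0 \<le> H * (real y' - real y)" using H yy' by simp
        moreover have "M \<le> M * indicator B y' + M * indicator A y"
          using True M0 by (auto simp: indicator_def)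
        ultimately show ?thesis using yy by (simp add: algebra_simps)
      next
        case False
        then have "a \<le> real y" "real y' \<le> b" unfolding A_def B_def by auto
        then have "mu y' - mu y \<le> H * (real y' - real y)"
          using y1 yy' by (intro telescope_bound win) auto
        moreover have "0 \<le> M * indicator B y' + M * indicator A y"
          using M0 by (auto simp: indicator_def)
        ultimately show ?thesis using yy by (simp add: algebra_simps)
      qed
    qed
  qed
  also have "\<dots> = measure_pmf.expectation (Y (n+1)) (\<lambda>k. H * real k + M * indicator B k)
      - measure_pmf.expectation (Y n) (\<lambda>k. H * real k + (- M) * indicator A k)"
    using coup_exp[OF c(1,2) n1, of "\<lambda>k. H * real k + M * indicator B k" "\<lambda>k. H * real k + (- M) * indicator A k"]
    by simp
  also have "\<dots> = H * (measure_pmf.expectation (Y (n+1)) real - measure_pmf.expectation (Y n) real)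
      + (measure (Y n) A + measure (Y (n+1)) B) * M"
    using expY_lin[of n H M A] expY_lin[of "n+1" H "-M" B] expY_lin[of "n+1" H M B] expY_lin[of n H "-M" A] n1
    by (simp add: algebra_simps)
  finally show ?thesis unfolding A_def B_def M_def .
qed

lemma mu_bound:
  fixes h :: "real \<Rightarrow> real"
  assumes hm: "\<And>x y. x \<le> y \<Longrightarrow> h x \<le> h y" and h0: "\<And>x. 0 \<le> h x"
    and IH: "\<And>k. 1 \<le> k \<Longrightarrow> k < n \<Longrightarrow> real k * (mu (Suc k) - mu k) \<le> h (real k)"
    and n: "n \<ge> 1"
  shows "mu n \<le> real n * h (real n)"
proof -
  have "mu n - mu 1 \<le> h (real n) * (real n - real 1)"
  proof (rule telescope_bound)
    show "1 \<le> n" by (rule n)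
    fix k assume k: "1 \<le> k" "k < n"
    have "real k * (mu (Suc k) - mu k) \<le> h (real k)" using IH k by simp
    then have "mu (Suc k) - mu k \<le> h (real k) / real k" using k by (simp add: field_simps)
    also have "\<dots> \<le> h (real k)"
    proof -
      have "h (real k) * 1 \<le> h (real k) * real k" using k h0[of "real k"] by (intro mult_left_mono) auto
      then show ?thesis using k by (simp add: divide_le_eq)
    qed
    also have "\<dots> \<le> h (real n)" using k by (intro hm) simp
    finally show "mu (Suc k) - mu k \<le> h (real n)" .
  qed
  then show ?thesis using mu_1 h0[of "real n"] by (simp add: algebra_simps)
qed

lemma step_ineq:
  fixes h :: "real \<Rightarrow> real" and a gn E P :: real
  assumes hm: "\<And>x y. x \<le> y \<Longrightarrow> h x \<le> h y" and h0: "\<And>x. 0 \<le> h x"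
    and IH: "\<And>k. 1 \<le> k \<Longrightarrow> k < n \<Longrightarrow> real k * (mu (Suc k) - mu k) \<le> h (real k)"
    and n: "n \<ge> 2" and a: "a > 0" and gn: "gn < real n"
    and E: "measure_pmf.expectation (Y (n+1)) real - measure_pmf.expectation (Y n) real \<le> E"
    and P: "measure (Y n) {k. real k < a} + measure (Y (n+1)) {k. real k > gn} \<le> P" "P < 1"
    and cond: "real n * E / a * h gn + P * (real n ^ 2 + 1) * h (real n) \<le> h (real n)"
  shows "real n * (mu (Suc n) - mu n) \<le> h (real n)"
proof -
  define H where "H = h gn / a"
  have H0: "H \<ge> 0" unfolding H_def using h0 a by simp
  define D where "D = mu (Suc n) - mu n"
  have D0: "D \<ge> 0" unfolding D_def using n mu_mono[of n "Suc n"] by auto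
  have win: "mu (Suc k) - mu k \<le> H" if k: "1 \<le> k" "a \<le> real k" "real k < gn" for k
  proof -
    have kn: "k < n" using k gn by linarith
    have "real k * (mu (Suc k) - mu k) \<le> h (real k)" using IH k kn by simp
    then have "mu (Suc k) - mu k \<le> h (real k) / real k" using k by (simp add: field_simps)
    also have "\<dots> \<le> h gn / real k" using k by (intro divide_right_mono hm) auto
    also have "\<dots> \<le> h gn / a" using k a h0[of gn] by (intro divide_left_mono) auto
    finally show ?thesis unfolding H_def .
  qed
  have Pnn: "0 \<le> measure (Y n) {k. real k < a} + measure (Y (n+1)) {k. real k > gn}" by simp
  have key: "D \<le> H * (measure_pmf.expectation (Y (n+1)) real - measure_pmf.expectation (Y n) real)
      + (measure (Y n) {k. real k < a} + measure (Y (n+1)) {k. real k > gn}) * mu (Suc n)"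
    unfolding D_def by (rule key_step[OF n H0 win])
  have muS: "mu (Suc n) = mu n + D" unfolding D_def by simp
  have mun: "mu n \<le> real n * h (real n)"
    using n by (intro mu_bound[OF hm h0 IH]) auto
  have "D \<le> H * E + P * (mu n + D)"
  proof -
    have "H * (measure_pmf.expectation (Y (n+1)) real - measure_pmf.expectation (Y n) real) \<le> H * E"
      using E H0 by (rule mult_left_mono)
    moreover have "(measure (Y n) {k. real k < a} + measure (Y (n+1)) {k. real k > gn}) * mu (Suc n) \<le> P * (mu n + D)"
      using mult_right_mono[OF P(1) mu_nn[of "Suc n"]] muS by simp
    ultimately show ?thesis using key by linarith
  qed
  also have "\<dots> \<le> H * E + P * (real n * h (real n) + D)"
  proof -
    have "0 \<le> P" using P(1) Pnn by linarith
    then show ?thesis using mun by (intro add_left_mono mult_left_mono) auto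
  qed
  finally have "D * (1 - P) \<le> H * E + P * real n * h (real n)" by (simp add: algebra_simps)
  then have "real n * (D * (1 - P)) \<le> real n * (H * E + P * real n * h (real n))"
    by (intro mult_left_mono) auto
  also have "\<dots> = real n * E / a * h gn + P * real n ^ 2 * h (real n)"
    unfolding H_def by (simp add: algebra_simps power2_eq_square)
  also have "\<dots> \<le> h (real n) - P * h (real n)" using cond by (simp add: algebra_simps)
  finally have "(real n * D) * (1 - P) \<le> h (real n) * (1 - P)" by (simp add: algebra_simps)
  then show ?thesis unfolding D_def[symmetric] using P(2) by simp
qed


lemma ceil_le_real: "nat \<lceil>y\<rceil> \<le> n \<Longrightarrow> y \<le> real n"
  using real_nat_ceiling_ge[of y] of_nat_mono[of "nat \<lceil>y\<rceil>" n] by linarith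

lemma ln3: "1 \<le> ln (3::real)"
proof -
  have "ln (exp 1) \<le> ln (3::real)" using exp_le by (subst ln_le_cancel_iff) auto
  then show ?thesis by simp
qed

lemma le_inv_plus1: "0 \<le> (Z::real) \<Longrightarrow> 0 < t \<Longrightarrow> t \<le> 1 / (Z + 1) \<Longrightarrow> Z * t \<le> 1"
  by (simp add: field_simps)

lemma Delta_bound:
  fixes \<alpha> \<epsilon> c1 c2 c3 :: real and \<delta> :: "nat \<Rightarrow> real" and N1 :: nat
  assumes a0: "0 < \<alpha>" "\<alpha> < 1" and e0: "0 < \<epsilon>" and c1: "0 < c1" and c2: "0 \<le> c2" and c3: "0 \<le> c3"
    and N1: "N1 \<ge> 2"
    and Dd: "\<And>n. n \<ge> N1 \<Longrightarrow> \<bar>\<delta> n\<bar> \<le> c1 * ln (real n) powr (-1-\<epsilon>)"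
    and Ed: "\<And>n. n \<ge> N1 \<Longrightarrow> measure_pmf.expectation (Y (n+1)) real - measure_pmf.expectation (Y n) real - \<alpha> \<le> c2 * \<bar>\<delta> n\<bar>"
    and Pd: "\<And>n. n \<ge> N1 \<Longrightarrow> measure (Y n) {k. \<bar>real k - \<alpha> * real n\<bar> > \<delta> n * real n} \<le> c3 * real n powr (-2-\<epsilon>)"
  shows "\<exists>A. \<forall>n\<ge>1. real n * (mu (Suc n) - mu n) \<le> A"
proof -
  define t where "t n = ln (real n) powr (-1-\<epsilon>)" for n :: nat
  define C4 where "C4 = (\<epsilon>/(1+\<epsilon>)) powr (-1-\<epsilon>)"
  define c4 where "c4 = 4 * c3 * C4"
  define e where "e = c1 * c2"
  define K' where "K' = (c1 + e + c4 * \<alpha> + 1) / \<alpha>"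
  define \<gamma> where "\<gamma> = (1 + \<alpha>) / 2"
  define cg where "cg = - ln \<gamma>"
  define K where "K = K' / (\<epsilon> * cg)"
  define t0 where "t0 = min (\<alpha>/(2*c1)) (min ((1-\<alpha>)/(4*c1)) (min (1/(2*c4+1)) (1/(c4*\<alpha>*K' + c1*K' + 1))))"
  have C4: "0 < C4" unfolding C4_def using e0 by simp
  have c4: "0 \<le> c4" unfolding c4_def using C4 c3 by simp
  have e: "0 \<le> e" unfolding e_def using c1 c2 by simp
  have aK': "\<alpha> * K' = c1 + e + c4 * \<alpha> + 1" unfolding K'_def using a0 by simp
  have K': "0 < K'" unfolding K'_def using a0 c1 e c4 by (intro divide_pos_pos add_nonneg_pos) auto
  have g: "0 < \<gamma>" "\<gamma> < 1" unfolding \<gamma>_def using a0 by auto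
  have cg: "0 < cg" unfolding cg_def using g by simp
  have K: "0 < K" unfolding K_def using K' cg e0 by simp
  have KK': "K * (\<epsilon> * cg) = K'" unfolding K_def using cg e0 by simp
  have t0: "0 < t0" unfolding t0_def using a0 c1 c4 K' e0
    by (auto intro!: divide_pos_pos add_nonneg_pos mult_nonneg_nonneg)
  obtain Nt where Nt: "\<And>n. n \<ge> Nt \<Longrightarrow> t n \<le> t0"
    using t_small[OF e0 t0] unfolding t_def by blast
  define q1 where "q1 = nat \<lceil>3/\<gamma>\<rceil>"
  define q2 where "q2 = nat \<lceil>(3*\<alpha>+1)/(1-\<alpha>)\<rceil>"
  define Ns where "Ns = max (max N1 Nt) (max q1 (q2 + 2))"
  define D where "D n = mu (Suc n) - mu n" for n
  define S where "S = (\<Sum>n<Ns. \<bar>real n * D n\<bar>)"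
  define A where "A = exp K * (S + 1)"
  define h where "h x = A * exp (- K * ln (max x 3) powr (-\<epsilon>))" for x :: real
  have S0: "0 \<le> S" unfolding S_def by simp
  have A0: "0 < A" unfolding A_def using S0 by simp
  have hm: "h x \<le> h y" if "x \<le> y" for x y
  proof -
    have "ln (max x 3) \<le> ln (max y 3)" using that by simp
    then have "ln (max y 3) powr (-\<epsilon>) \<le> ln (max x 3) powr (-\<epsilon>)"
      using e0 ln3 by (intro powr_mono2') auto
    then show ?thesis unfolding h_def using A0 K by (simp add: mult_left_mono)
  qed
  have h0: "0 \<le> h x" for x unfolding h_def using A0 by simp
  have hlow: "S + 1 \<le> h x" for x
  proof -
    have "1 \<le> ln (max x 3)" using ln3 by (rule order.trans) simp
    then have "ln (max x 3) powr (-\<epsilon>) \<le> 1 powr (-\<epsilon>)"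
      using e0 by (intro powr_mono2') auto
    then have "- K \<le> - K * ln (max x 3) powr (-\<epsilon>)" using K by simp
    then have "exp (- K) \<le> exp (- K * ln (max x 3) powr (-\<epsilon>))" by simp
    then have "A * exp (- K) \<le> h x" unfolding h_def using A0 by simp
    moreover have "A * exp (- K) = S + 1" unfolding A_def by (simp add: exp_minus)
    ultimately show ?thesis by simp
  qed
  have hup: "h x \<le> A" for x
  proof -
    have "0 \<le> K * ln (max x 3) powr (-\<epsilon>)" using K by simp
    then have "exp (- K * ln (max x 3) powr (-\<epsilon>)) \<le> 1" by simp
    then show ?thesis unfolding h_def using A0 by (simp add: mult_left_le)
  qed
  have claim: "real n * D n \<le> h (real n)" if "n \<ge> 1" for n
    using that
  proof (induction n rule: less_induct)
    case (less n)
    show ?case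
    proof (cases "n < Ns")
      case True
      have "real n * D n \<le> \<bar>real n * D n\<bar>" by simp
      also have "\<dots> \<le> S" unfolding S_def using True
        by (intro member_le_sum) auto
      also have "\<dots> \<le> h (real n)" using hlow[of "real n"] by simp
      finally show ?thesis .
    next
      case False
      then have nNs: "n \<ge> Ns" by simp
      define x where "x = real n"
      have nN1: "n \<ge> N1" and nNt: "n \<ge> Nt" and n2: "n \<ge> 2"
        using nNs unfolding Ns_def by auto
      have x3: "3 / \<gamma> \<le> x"
      proof -
        have "q1 \<le> n" using nNs unfolding Ns_def by simp
        then show ?thesis unfolding x_def q1_def by (rule ceil_le_real)
      qed
      have xa: "(3*\<alpha>+1)/(1-\<alpha>) \<le> x"
      proof -
        have "q2 \<le> n" using nNs unfolding Ns_def by simp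
        then show ?thesis unfolding x_def q2_def by (rule ceil_le_real)
      qed
      have x1: "1 < x" unfolding x_def using n2 by simp
      have x0: "0 < x" using x1 by simp
      have tpos: "0 < t n" unfolding t_def using n2 by simp
      have tle: "t n \<le> t0" "t (n+1) \<le> t0" using Nt nNt by auto
      have tA: "c1 * t n \<le> \<alpha> / 2"
      proof -
        have "t n \<le> \<alpha> / (2 * c1)" using tle(1) unfolding t0_def by simp
        then show ?thesis using c1 by (simp add: field_simps)
      qed
      have tB: "c1 * t (n+1) \<le> (1 - \<alpha>) / 4"
      proof -
        have "t (n+1) \<le> (1 - \<alpha>) / (4 * c1)" using tle(2) unfolding t0_def by simp
        then show ?thesis using c1 by (simp add: field_simps)
      qed
      have tC: "c4 * t n \<le> 1 / 2"
      proof -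
        have "t n \<le> 1 / (2 * c4 + 1)" using tle(1) unfolding t0_def by simp
        then have "(2 * c4) * t n \<le> 1" using c4 tpos by (intro le_inv_plus1) auto
        then show ?thesis by simp
      qed
      have tD: "(c4 * \<alpha> * K' + c1 * K') * t n \<le> 1"
      proof -
        have "t n \<le> 1 / ((c4 * \<alpha> * K' + c1 * K') + 1)" using tle(1) unfolding t0_def by simp
        then show ?thesis using c4 tpos a0 K' c1 by (intro le_inv_plus1) auto
      qed
      define a where "a = (\<alpha> - c1 * t n) * x"
      have a: "0 < a" unfolding a_def using tA a0 x0 by (intro mult_pos_pos) auto
      have gn: "\<gamma> * x < x" using g x0 by simp
      have Ebound: "measure_pmf.expectation (Y (n+1)) real - measure_pmf.expectation (Y n) real \<le> \<alpha> + e * t n"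
      proof -
        have "c2 * \<bar>\<delta> n\<bar> \<le> c2 * (c1 * t n)" using Dd[OF nN1] c2 unfolding t_def by (intro mult_left_mono) auto
        then show ?thesis using Ed[OF nN1] unfolding e_def by (simp add: algebra_simps)
      qed
      define P where "P = 2 * c3 * x powr (-2-\<epsilon>)"
      have Pa: "measure (Y n) {k. real k < a} \<le> c3 * x powr (-2-\<epsilon>)"
      proof -
        have "{k. real k < a} \<subseteq> {k. \<bar>real k - \<alpha> * real n\<bar> > \<delta> n * real n}"
        proof
          fix k assume "k \<in> {k. real k < a}"
          then have k: "real k < (\<alpha> - c1 * t n) * x" unfolding a_def by simp
          have "\<delta> n * x \<le> \<bar>\<delta> n\<bar> * x" using x0 by (intro mult_right_mono) auto
          also have "\<dots> \<le> c1 * t n * x" using Dd[OF nN1] x0 unfolding t_def by (intro mult_right_mono) auto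
          also have "\<dots> < \<alpha> * x - real k" using k by (simp add: algebra_simps)
          also have "\<dots> \<le> \<bar>real k - \<alpha> * x\<bar>" by simp
          finally show "k \<in> {k. \<bar>real k - \<alpha> * real n\<bar> > \<delta> n * real n}" unfolding x_def by simp
        qed
        then have "measure (Y n) {k. real k < a} \<le> measure (Y n) {k. \<bar>real k - \<alpha> * real n\<bar> > \<delta> n * real n}"
          by (intro measure_pmf.finite_measure_mono) auto
        also have "\<dots> \<le> c3 * x powr (-2-\<epsilon>)" using Pd[OF nN1] unfolding x_def .
        finally show ?thesis .
      qed
      have Pb: "measure (Y (n+1)) {k. real k > \<gamma> * x} \<le> c3 * x powr (-2-\<epsilon>)"
      proof -
        have nN1': "n + 1 \<ge> N1" using nN1 by simp
        have xa': "(\<alpha> + c1 * t (n+1)) * (x + 1) \<le> \<gamma> * x"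
        proof -
          have "(\<alpha> + c1 * t (n+1)) * (x + 1) \<le> (\<alpha> + (1 - \<alpha>) / 4) * (x + 1)"
            using tB x0 by (intro mult_right_mono) auto
          also have "\<dots> \<le> \<gamma> * x"
          proof -
            have "3*\<alpha>+1 \<le> (1-\<alpha>) * x" using xa a0 by (simp add: field_simps)
            then show ?thesis unfolding \<gamma>_def by (simp add: field_simps)
          qed
          finally show ?thesis .
        qed
        have "{k. real k > \<gamma> * x} \<subseteq> {k. \<bar>real k - \<alpha> * real (n+1)\<bar> > \<delta> (n+1) * real (n+1)}"
        proof
          fix k assume "k \<in> {k. real k > \<gamma> * x}"
          then have k: "real k > \<gamma> * x" by simp
          have rn: "real (n+1) = x + 1" unfolding x_def by simp
          have "\<delta> (n+1) * (x+1) \<le> \<bar>\<delta> (n+1)\<bar> * (x+1)" using x0 by (intro mult_right_mono) auto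
          also have "\<dots> \<le> c1 * t (n+1) * (x+1)" using Dd[OF nN1'] x0 unfolding t_def by (intro mult_right_mono) auto
          also have "\<dots> \<le> \<gamma> * x - \<alpha> * (x + 1)" using xa' by (simp add: algebra_simps)
          also have "\<dots> < real k - \<alpha> * (x + 1)" using k by simp
          also have "\<dots> \<le> \<bar>real k - \<alpha> * (x+1)\<bar>" by simp
          finally show "k \<in> {k. \<bar>real k - \<alpha> * real (n+1)\<bar> > \<delta> (n+1) * real (n+1)}" unfolding rn by simp
        qed
        then have "measure (Y (n+1)) {k. real k > \<gamma> * x} \<le> measure (Y (n+1)) {k. \<bar>real k - \<alpha> * real (n+1)\<bar> > \<delta> (n+1) * real (n+1)}"
          by (intro measure_pmf.finite_measure_mono) auto
        also have "\<dots> \<le> c3 * real (n+1) powr (-2-\<epsilon>)" using Pd[OF nN1'] .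
        also have "\<dots> \<le> c3 * x powr (-2-\<epsilon>)"
          using c3 x0 e0 unfolding x_def by (intro mult_left_mono powr_mono2') auto
        finally show ?thesis .
      qed
      have PP: "measure (Y n) {k. real k < a} + measure (Y (n+1)) {k. real k > \<gamma> * x} \<le> P"
        using Pa Pb unfolding P_def by simp
      have xe: "x powr (-\<epsilon>) \<le> C4 * t n"
        using npow_le_ln[OF e0 x1] unfolding C4_def t_def x_def by simp
      have Pn2: "P * (x^2 + 1) \<le> c4 * t n"
      proof -
        have P0: "0 \<le> P" unfolding P_def using c3 by simp
        have "1 \<le> x^2" using x1 by simp
        then have "P * (x^2 + 1) \<le> P * (2 * x^2)" using P0 by (intro mult_left_mono) auto
        also have "\<dots> = 4 * c3 * (x powr (-2-\<epsilon>) * x powr 2)"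
          unfolding P_def using x0 by (simp add: powr_realpow)
        also have "x powr (-2-\<epsilon>) * x powr 2 = x powr (-\<epsilon>)"
          by (simp add: powr_add[symmetric])
        also have "4 * c3 * x powr (-\<epsilon>) \<le> 4 * c3 * (C4 * t n)"
          using xe c3 by (intro mult_left_mono) auto
        finally show ?thesis unfolding c4_def by (simp add: algebra_simps)
      qed
      have P1: "P < 1"
      proof -
        have "x powr (-2-\<epsilon>) \<le> x powr (-\<epsilon>)" using x1 by (intro powr_mono) auto
        then have "P \<le> 2 * c3 * x powr (-\<epsilon>)" unfolding P_def using c3 by (intro mult_left_mono) auto
        also have "\<dots> \<le> 2 * c3 * (C4 * t n)" using xe c3 by (intro mult_left_mono) auto
        also have "\<dots> = c4 * t n / 2" unfolding c4_def by simp
        also have "\<dots> \<le> 1/4" using tC by simp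
        finally show ?thesis by simp
      qed
      have ratio: "h (\<gamma> * x) * (1 + K' * t n) \<le> h x"
      proof -
        have gx3: "3 \<le> \<gamma> * x" using x3 g by (simp add: field_simps)
        have mx1: "max (\<gamma> * x) 3 = \<gamma> * x" using gx3 by simp
        have mx2: "max x 3 = x" using gx3 gn by simp
        have lg: "ln (\<gamma> * x) = ln x - cg" unfolding cg_def using g x0 by (simp add: ln_mult)
        have L1: "1 \<le> ln x - cg"
        proof -
          have "ln 3 \<le> ln (\<gamma> * x)" using gx3 by simp
          then show ?thesis using ln3 lg by simp
        qed
        have tan: "ln x powr (-\<epsilon>) + \<epsilon> * cg * ln x powr (-1-\<epsilon>) \<le> (ln x - cg) powr (-\<epsilon>)"
          by (rule tangent_powr[OF e0 cg L1])
        have tx: "ln x powr (-1-\<epsilon>) = t n" unfolding t_def x_def ..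
        have "h (\<gamma> * x) = A * exp (- K * (ln x - cg) powr (-\<epsilon>))"
          unfolding h_def mx1 lg ..
        also have "\<dots> \<le> A * exp (- K * (ln x powr (-\<epsilon>) + \<epsilon> * cg * t n))"
          using tan K A0 unfolding tx by (intro mult_left_mono) auto
        also have "\<dots> = h x * exp (- K' * t n)"
          unfolding h_def mx2 KK'[symmetric] by (simp add: algebra_simps exp_add[symmetric])
        also have "\<dots> \<le> h x * (1 / (1 + K' * t n))"
          using exp_neg_le[of "K' * t n"] K' tpos h0[of x] by (intro mult_left_mono) auto
        finally have r: "h (\<gamma> * x) \<le> h x / (1 + K' * t n)" by simp
        have v0: "0 < 1 + K' * t n" using K' tpos by (simp add: add_pos_pos)
        show ?thesis using r v0 by (simp add: le_divide_eq)
      qed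
      have poly: "(\<alpha> + e * t n) / ((\<alpha> - c1 * t n) * (1 + K' * t n)) + c4 * t n \<le> 1"
        by (rule poly_ineq[OF a0(1) _ e c4 aK' tpos tA tC tD]) (use c1 in simp)
      have cond: "x * (\<alpha> + e * t n) / a * h (\<gamma> * x) + P * (x^2 + 1) * h x \<le> h x"
      proof -
        define q where "q = (\<alpha> + e * t n) / (\<alpha> - c1 * t n)"
        have q0: "0 \<le> q" unfolding q_def using tA a0 e tpos by (intro divide_nonneg_pos) auto
        have v0: "0 < 1 + K' * t n" using K' tpos by (simp add: add_pos_pos)
        have "x * (\<alpha> + e * t n) / a = q" unfolding q_def a_def using x0 by simp
        moreover have "q * h (\<gamma> * x) \<le> q * (h x / (1 + K' * t n))"
          using ratio v0 q0 by (intro mult_left_mono) (auto simp: field_simps)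
        moreover have "P * (x^2 + 1) * h x \<le> c4 * t n * h x"
          using Pn2 h0[of x] by (intro mult_right_mono) auto
        moreover have "q * (h x / (1 + K' * t n)) + c4 * t n * h x \<le> 1 * h x"
        proof -
          have "q * (h x / (1 + K' * t n)) + c4 * t n * h x
             = ((\<alpha> + e * t n) / ((\<alpha> - c1 * t n) * (1 + K' * t n)) + c4 * t n) * h x"
            unfolding q_def by (simp add: algebra_simps)
          also have "\<dots> \<le> 1 * h x" using poly h0[of x] by (intro mult_right_mono) auto
          finally show ?thesis .
        qed
        ultimately show ?thesis by simp
      qed
      have IH: "\<And>k. 1 \<le> k \<Longrightarrow> k < n \<Longrightarrow> real k * (mu (Suc k) - mu k) \<le> h (real k)"
        using less.IH unfolding D_def by simp
      have "real n * (mu (Suc n) - mu n) \<le> h (real n)"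
        by (rule step_ineq[OF hm h0 IH n2 a gn[unfolded x_def] Ebound PP[unfolded x_def] P1 cond[unfolded x_def]])
      then show ?thesis unfolding D_def .
    qed
  qed
  show ?thesis using claim hup unfolding D_def by (meson order.trans)
qed

end


theorem mainTheorem2:
  fixes Y X :: "nat \<Rightarrow> nat pmf"
  assumes "condition1 Y"
    and "leader_election Y X"
  shows "(\<forall>n\<ge>1. (\<integral>\<^sup>+ t. ennreal (real t) \<partial>(measure_pmf (X n))) < \<infinity>) \<and>
         ((\<lambda>n. measure_pmf.expectation (X (n+1)) real - measure_pmf.expectation (X n) real)
           \<in> O(\<lambda>n. 1 / real n)) \<and>
         (\<exists>C::real. \<forall>n\<ge>1. \<forall>m\<ge>1.
           dW (X n) (X m) \<le> ennreal (C * \<bar>real n - real m\<bar> / real (min n m)))"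
proof -
  note c1def = assms(1)[unfolded condition1_def]
  note ledef = assms(2)[unfolded leader_election_def]
  interpret L: LE Y X
  proof
    show "\<And>n. n \<ge> 1 \<Longrightarrow> set_pmf (Y n) \<subseteq> {1..n}" using c1def by blast
    show "\<And>n. n \<ge> 2 \<Longrightarrow> pmf (Y n) n < 1" using c1def by blast
    show "\<And>n k. n \<ge> 1 \<Longrightarrow> k \<ge> 1 \<Longrightarrow> measure (Y (n+1)) {..k} \<le> measure (Y n) {..k}"
      using c1def by blast
    show "X 1 = return_pmf 0" using ledef by blast
    show "\<And>n. n \<ge> 2 \<Longrightarrow> X n = bind_pmf (Y n) (\<lambda>k. map_pmf Suc (X k))" using ledef by blast
  qed
  obtain \<alpha> \<epsilon> :: real and \<delta> :: "nat \<Rightarrow> real" where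
    a0: "0 < \<alpha>" "\<alpha> < 1" and e0: "0 < \<epsilon>" and
    Dd: "\<delta> \<in> O(\<lambda>n. (if n = 1 then 1 else ln (real n)) powr (-1 - \<epsilon>))" and
    Ed: "(\<lambda>n. measure_pmf.expectation (Y (n+1)) real
              - measure_pmf.expectation (Y n) real - \<alpha>) \<in> O(\<delta>)" and
    Pd: "(\<lambda>n. measure_pmf.prob (Y n) {k. \<bar>real k - \<alpha> * real n\<bar> > \<delta> n * real n})
           \<in> O(\<lambda>n. real n powr (-2 - \<epsilon>))"
    using c1def by blast
  obtain c1 where c1: "c1 > 0" and ev1: "eventually (\<lambda>n. norm (\<delta> n) \<le> c1 * norm ((if n = 1 then 1 else ln (real n)) powr (-1 - \<epsilon>))) at_top"
    using landau_o.bigE[OF Dd] by blast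
  obtain c2 where c2: "c2 > 0" and ev2: "eventually (\<lambda>n. norm (measure_pmf.expectation (Y (n+1)) real
              - measure_pmf.expectation (Y n) real - \<alpha>) \<le> c2 * norm (\<delta> n)) at_top"
    using landau_o.bigE[OF Ed] by blast
  obtain c3 where c3: "c3 > 0" and ev3: "eventually (\<lambda>n. norm (measure_pmf.prob (Y n) {k. \<bar>real k - \<alpha> * real n\<bar> > \<delta> n * real n})
       \<le> c3 * norm (real n powr (-2 - \<epsilon>))) at_top"
    using landau_o.bigE[OF Pd] by blast
  from eventually_conj[OF ev1 eventually_conj[OF ev2 ev3]]
  obtain N where N: "\<And>n. n \<ge> N \<Longrightarrow> norm (\<delta> n) \<le> c1 * norm ((if n = 1 then 1 else ln (real n)) powr (-1 - \<epsilon>))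
      \<and> norm (measure_pmf.expectation (Y (n+1)) real - measure_pmf.expectation (Y n) real - \<alpha>) \<le> c2 * norm (\<delta> n)
      \<and> norm (measure_pmf.prob (Y n) {k. \<bar>real k - \<alpha> * real n\<bar> > \<delta> n * real n}) \<le> c3 * norm (real n powr (-2 - \<epsilon>))"
    unfolding eventually_at_top_linorder by blast
  define N1 where "N1 = max N 2"
  have "\<exists>A. \<forall>n\<ge>1. real n * (L.mu (Suc n) - L.mu n) \<le> A"
  proof (rule L.Delta_bound[OF a0 e0 c1 less_imp_le[OF c2] less_imp_le[OF c3]])
    show "2 \<le> N1" unfolding N1_def by simp
    fix n assume n: "N1 \<le> n"
    then have nN: "n \<ge> N" and n2: "n \<ge> 2" unfolding N1_def by auto
    note Nn = N[OF nN]
    show "\<bar>\<delta> n\<bar> \<le> c1 * ln (real n) powr (-1-\<epsilon>)" using Nn n2 by simp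
    show "measure_pmf.expectation (Y (n+1)) real - measure_pmf.expectation (Y n) real - \<alpha> \<le> c2 * \<bar>\<delta> n\<bar>"
      using Nn by (simp add: abs_le_iff)
    show "measure (Y n) {k. \<bar>real k - \<alpha> * real n\<bar> > \<delta> n * real n} \<le> c3 * real n powr (-2-\<epsilon>)"
      using Nn by simp
  qed
  then obtain A where A: "\<And>n. n \<ge> 1 \<Longrightarrow> real n * (L.mu (Suc n) - L.mu n) \<le> A" by blast
  define C where "C = max A 1"
  have C: "0 < C" unfolding C_def by simp
  have Dn: "L.mu (Suc n) - L.mu n \<le> C / real n" and Dn0: "0 \<le> L.mu (Suc n) - L.mu n" if "n \<ge> 1" for n
  proof -
    have "real n * (L.mu (Suc n) - L.mu n) \<le> C" using A[OF that] unfolding C_def by simp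
    then show "L.mu (Suc n) - L.mu n \<le> C / real n" using that by (simp add: field_simps)
    show "0 \<le> L.mu (Suc n) - L.mu n" using L.mu_mono[of n "Suc n"] that by simp
  qed
  have part1: "\<forall>n\<ge>1. (\<integral>\<^sup>+ t. ennreal (real t) \<partial>(measure_pmf (X n))) < \<infinity>"
    using L.E_fin by blast
  have part2: "(\<lambda>n. measure_pmf.expectation (X (n+1)) real - measure_pmf.expectation (X n) real)
           \<in> O(\<lambda>n. 1 / real n)"
  proof (rule landau_o.bigI[OF C])
    show "eventually (\<lambda>n. norm (measure_pmf.expectation (X (n+1)) real - measure_pmf.expectation (X n) real)
        \<le> C * norm (1 / real n)) at_top"
      unfolding eventually_at_top_linorder
    proof (intro exI allI impI)
      fix n :: nat assume n: "n \<ge> 1"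
      have "norm (measure_pmf.expectation (X (n+1)) real - measure_pmf.expectation (X n) real)
          = L.mu (Suc n) - L.mu n" using Dn0[OF n] unfolding L.mu_def by simp
      also have "\<dots> \<le> C / real n" by (rule Dn[OF n])
      also have "\<dots> = C * norm (1 / real n)" by simp
      finally show "norm (measure_pmf.expectation (X (n+1)) real - measure_pmf.expectation (X n) real)
        \<le> C * norm (1 / real n)" .
    qed
  qed
  have diff: "L.mu m - L.mu n \<le> C * (real m - real n) / real n" if "1 \<le> n" "n \<le> m" for n m
  proof -
    have "L.mu m - L.mu n \<le> (C / real n) * (real m - real n)"
    proof (rule L.telescope_bound[OF that(2)])
      fix k assume k: "n \<le> k" "k < m"
      have "L.mu (Suc k) - L.mu k \<le> C / real k" using Dn[of k] k that by simp
      also have "\<dots> \<le> C / real n" using C k that by (intro divide_left_mono) auto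
      finally show "L.mu (Suc k) - L.mu k \<le> C / real n" .
    qed
    then show ?thesis by simp
  qed
  have part3: "\<forall>n\<ge>1. \<forall>m\<ge>1. dW (X n) (X m) \<le> ennreal (C * \<bar>real n - real m\<bar> / real (min n m))"
  proof (intro allI impI)
    fix n m :: nat assume n: "n \<ge> 1" and m: "m \<ge> 1"
    show "dW (X n) (X m) \<le> ennreal (C * \<bar>real n - real m\<bar> / real (min n m))"
    proof (cases "n \<le> m")
      case True
      have "dW (X n) (X m) \<le> ennreal (L.mu m - L.mu n)" by (rule L.dW_le(1)[OF n True])
      also have "\<dots> \<le> ennreal (C * \<bar>real n - real m\<bar> / real (min n m))"
        using diff[OF n True] True by (intro ennreal_leI) (simp add: min_def)
      finally show ?thesis .
    next
      case False
      then have mn: "m \<le> n" by simp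
      have "dW (X n) (X m) \<le> ennreal (L.mu n - L.mu m)" by (rule L.dW_le(2)[OF m mn])
      also have "\<dots> \<le> ennreal (C * \<bar>real n - real m\<bar> / real (min n m))"
        using diff[OF m mn] mn by (intro ennreal_leI) (simp add: min_def)
      finally show ?thesis .
    qed
  qed
  show ?thesis using part1 part2 part3 by blast
qed

end
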